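(* Let $\varepsilon\in(0,1/256]$. For every $\hat x\in Q_1$ there exist $\tau\in\Gamma$ and $\rho\in\{1,\dots,\lceil1/\varepsilon\rceil\}^{|\tau|}$ such that $\hat x\in P(\mathcal S(\tau),\rho)$.
   Context: Minimum Knapsack data: $n$ items with costs $c\in\mathbb{R}^n_{\ge0}$, weights $w\in\mathbb{R}^n_{\ge0}$, target $b$; items are indexed so that $1=c_1\ge c_2\ge\dots\ge c_n$. $Q=\{x\in\{0,1\}^n:w^Tx\ge b\}$ and $Q_1=\{x\in Q: x_1=1\}$. $C_\varepsilon=\lceil\log_{1+\varepsilon}(1/\varepsilon)\rceil$. $\Gamma$ is the set of integer vectors $\tau=(\tau_1,\dots,\tau_K)\in\mathbb{Z}_{\ge0}^K$ with $0\le K=|\tau|\le\lceil2\sqrt{C_\varepsilon}\rceil$, $\tau_k+k\le\tau_{k+1}$ for $k\in[K-1]$, and $\tau_K\le C_\varepsilon-1$. For $\tau\in\Gamma$, $\mathcal S(\tau)=\{S_1,\dots,S_K,S_\infty\}$ where $S_k=\{i\in\{2,\dots,n\}:(1+\varepsilon)^{-\tau_k}\ge c_i>(1+\varepsilon)^{-\min\{\tau_k+k,C_\varepsilon\}}\}$ for $k\in[K]$, and $S_\infty=\{i\in\{2,\dots,n\}: c_i\le(1+\varepsilon)^{-C_\varepsilon}\text{ and } c_i<\min_{l\in S_K}c_l\}$ (the second condition omitted if $K=0$). For $\rho\in\{1,\dots,\lceil1/\varepsilon\rceil\}^K$, $P(\mathcal S,\rho)$ is the set of $x\in\mathbb{R}^n$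 with: $x_1=1$; $w^Tx\ge b$; $\sum_{i\in S_k}x_i=\rho_k$ for $k\in[K]$ with $\rho_k<\lceil1/\varepsilon\rceil$; $\sum_{i\in S_k}x_i\ge\rho_k$ for $k\in[K]$ with $\rho_k=\lceil1/\varepsilon\rceil$; $x_i=0$ for $i\in\{2,\dots,n\}\setminus\bigcup_{k\in[K]\cup\{\infty\}}S_k$; $0\le x_i\le1$ for $i\in\bigcup_{k\in[K]\cup\{\infty\}}S_k$. *)

theory Defs
  imports Complex_Main
begin

text \<open>Items are indexed 1..n; vectors are functions nat => real, only the
  values on {1..n} matter.\<close>

definition C_eps :: "real \<Rightarrow> nat" where
  "C_eps \<epsilon> = nat \<lceil>log (1 + \<epsilon>) (1 / \<epsilon>)\<rceil>"

definition R_eps :: "real \<Rightarrow> nat" where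
  "R_eps \<epsilon> = nat \<lceil>1 / \<epsilon>\<rceil>"

definition Q1 :: "nat \<Rightarrow> (nat \<Rightarrow> real) \<Rightarrow> real \<Rightarrow> (nat \<Rightarrow> real) set" where
  "Q1 n w b = {x. (\<forall>i\<in>{1..n}. x i \<in> {0, 1}) \<and> (\<Sum>i=1..n. w i * x i) \<ge> b \<and> x 1 = 1}"

text \<open>tau is a list (tau_1,...,tau_K) stored 0-indexed: tau ! (k-1) = tau_k.\<close>
definition Gamma :: "real \<Rightarrow> nat list set" where
  "Gamma \<epsilon> = {\<tau>. length \<tau> \<le> nat \<lceil>2 * sqrt (real (C_eps \<epsilon>))\<rceil>
      \<and> (\<forall>k. 1 \<le> k \<and> k < length \<tau> \<longrightarrow> \<tau> ! (k - 1) + k \<le> \<tau> ! k)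
      \<and> (length \<tau> > 0 \<longrightarrow> \<tau> ! (length \<tau> - 1) + 1 \<le> C_eps \<epsilon>)}"

definition S_k :: "real \<Rightarrow> nat \<Rightarrow> (nat \<Rightarrow> real) \<Rightarrow> nat list \<Rightarrow> nat \<Rightarrow> nat set" where
  "S_k \<epsilon> n c \<tau> k = {i\<in>{2..n}. (1 + \<epsilon>) powr (- real (\<tau> ! (k - 1))) \<ge> c i
      \<and> c i > (1 + \<epsilon>) powr (- real (min (\<tau> ! (k - 1) + k) (C_eps \<epsilon>)))}"

definition S_inf :: "real \<Rightarrow> nat \<Rightarrow> (nat \<Rightarrow> real) \<Rightarrow> nat list \<Rightarrow> nat set" where
  "S_inf \<epsilon> n c \<tau> = {i\<in>{2..n}. c i \<le> (1 + \<epsilon>) powr (- real (C_eps \<epsilon>))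
      \<and> (length \<tau> > 0 \<longrightarrow> (\<forall>l\<in>S_k \<epsilon> n c \<tau> (length \<tau>). c i < c l))}"

definition Ppoly :: "real \<Rightarrow> nat \<Rightarrow> (nat \<Rightarrow> real) \<Rightarrow> (nat \<Rightarrow> real) \<Rightarrow> real
      \<Rightarrow> nat list \<Rightarrow> nat list \<Rightarrow> (nat \<Rightarrow> real) set" where
  "Ppoly \<epsilon> n c w b \<tau> \<rho> = {x.
      x 1 = 1
    \<and> (\<Sum>i=1..n. w i * x i) \<ge> b
    \<and> (\<forall>k\<in>{1..length \<tau>}. \<rho> ! (k - 1) < R_eps \<epsilon> \<longrightarrow>
          (\<Sum>i\<in>S_k \<epsilon> n c \<tau> k. x i) = real (\<rho> ! (k - 1)))
    \<and> (\<forall>k\<in>{1..length \<tau>}. \<rho> ! (k - 1) = R_eps \<epsilon> \<longrightarrow>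
          (\<Sum>i\<in>S_k \<epsilon> n c \<tau> k. x i) \<ge> real (\<rho> ! (k - 1)))
    \<and> (\<forall>i\<in>{2..n}. i \<notin> (\<Union>k\<in>{1..length \<tau>}. S_k \<epsilon> n c \<tau> k) \<union> S_inf \<epsilon> n c \<tau> \<longrightarrow> x i = 0)
    \<and> (\<forall>i\<in>(\<Union>k\<in>{1..length \<tau>}. S_k \<epsilon> n c \<tau> k) \<union> S_inf \<epsilon> n c \<tau>. 0 \<le> x i \<and> x i \<le> 1)}"

end

theory Submission imports Defs begin


lemma greedy:
  assumes "L \<subseteq> {..<C}"
  shows "k \<ge> 1 \<Longrightarrow> \<exists>\<tau>::nat list. (\<forall>j<length \<tau>. \<tau>!j \<ge> s \<and> \<tau>!j \<in> L)
     \<and> (\<forall>j. Suc j < length \<tau> \<longrightarrow> \<tau>!j + (k+j) \<le> \<tau>!(Suc j))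
     \<and> (\<forall>t\<in>L. t \<ge> s \<longrightarrow> (\<exists>j<length \<tau>. \<tau>!j \<le> t \<and> t < \<tau>!j + (k+j)))"
proof (induction "C - s" arbitrary: s k rule: less_induct)
  case less
  show ?case
  proof (cases "{t\<in>L. t \<ge> s} = {}")
    case True
    then show ?thesis by (rule_tac x="[]" in exI) auto
  next
    case False
    define m where "m = Min {t\<in>L. t \<ge> s}"
    have fin: "finite {t\<in>L. t \<ge> s}" using assms finite_subset[of _ "{..<C}"] by auto
    have mL: "m \<in> L" "m \<ge> s" using Min_in[OF fin False] unfolding m_def by auto
    have mmin: "\<And>t. t\<in>L \<Longrightarrow> t \<ge> s \<Longrightarrow> m \<le> t" using Min_le[OF fin] unfolding m_def by auto
    have "m < C" using mL assms by auto
    then have "C - (m+k) < C - s" using mL less.prems by auto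
    from less.hyps[OF this, of "Suc k"] obtain \<tau> where
      t1: "\<forall>j<length \<tau>. \<tau>!j \<ge> m+k \<and> \<tau>!j \<in> L"
      and t2: "\<forall>j. Suc j < length \<tau> \<longrightarrow> \<tau>!j + (Suc k+j) \<le> \<tau>!(Suc j)"
      and t3: "\<forall>t\<in>L. t \<ge> m+k \<longrightarrow> (\<exists>j<length \<tau>. \<tau>!j \<le> t \<and> t < \<tau>!j + (Suc k+j))"
      by auto
    have A: "\<forall>j<length (m#\<tau>). (m#\<tau>)!j \<ge> s \<and> (m#\<tau>)!j \<in> L"
    proof (intro allI impI)
      fix j assume "j < length (m#\<tau>)"
      then show "s \<le> (m#\<tau>)!j \<and> (m#\<tau>)!j \<in> L" using t1 mL by (cases j) auto
    qed
    have B: "\<forall>j. Suc j < length (m#\<tau>) \<longrightarrow> (m#\<tau>)!j + (k+j) \<le> (m#\<tau>)!(Suc j)"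
    proof (intro allI impI)
      fix j assume "Suc j < length (m#\<tau>)"
      then show "(m#\<tau>)!j + (k+j) \<le> (m#\<tau>)!(Suc j)" using t1 t2
        by (cases j) auto
    qed
    have C: "\<forall>t\<in>L. t \<ge> s \<longrightarrow> (\<exists>j<length (m#\<tau>). (m#\<tau>)!j \<le> t \<and> t < (m#\<tau>)!j + (k+j))"
    proof (intro ballI impI)
      fix t assume tL: "t \<in> L" and ts: "s \<le> t"
      show "\<exists>j<length (m#\<tau>). (m#\<tau>)!j \<le> t \<and> t < (m#\<tau>)!j + (k+j)"
      proof (cases "t < m + k")
        case True
        then show ?thesis using mmin[OF tL ts] by (rule_tac x=0 in exI) auto
      next
        case False
        then obtain j where "j<length \<tau>" "\<tau>!j \<le> t" "t < \<tau>!j + (Suc k+j)" using t3 tL by auto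
        then show ?thesis by (rule_tac x="Suc j" in exI) auto
      qed
    qed
    show ?thesis using A B C by blast
  qed
qed

lemma tri:
  assumes "\<forall>j. Suc j < length \<tau> \<longrightarrow> \<tau>!j + (1+j) \<le> \<tau>!(Suc j)"
  shows "j < length \<tau> \<Longrightarrow> j*(j+1) \<le> 2 * \<tau>!j"
proof (induction j)
  case 0 then show ?case by simp
next
  case (Suc j)
  then have "\<tau>!j + (1+j) \<le> \<tau>!(Suc j)" using assms by auto
  with Suc show ?case by auto
qed

lemma level:
  fixes a c :: real
  assumes "a > 1" "c \<le> 1"
  shows "c > a powr (- real C) \<Longrightarrow> \<exists>t<C. a powr (- real t) \<ge> c \<and> c > a powr (- real (t+1))"
proof (induction C)
  case 0 then show ?case using assms by simp
next
  case (Suc C)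
  show ?case
  proof (cases "c > a powr (- real C)")
    case True then show ?thesis using Suc.IH by (meson less_SucI)
  next
    case False then show ?thesis using Suc.prems by (rule_tac x=C in exI) auto
  qed
qed

lemma lenb:
  fixes K C :: nat
  assumes "K*(K-1) \<le> 2*C" "K \<ge> 1 \<Longrightarrow> C \<ge> 1"
  shows "K \<le> nat \<lceil>2 * sqrt (real C)\<rceil>"
proof -
  have "real K \<le> 2 * sqrt (real C)"
  proof (cases "K \<ge> 2")
    case True
    then have "K*K \<le> 2*(K*(K-1))" by (cases K) auto
    with assms have "K*K \<le> 4*C" by linarith
    then have "real K * real K \<le> 4 * real C" by (metis of_nat_le_iff of_nat_mult of_nat_numeral)
    then have "sqrt (real K * real K) \<le> sqrt (4 * real C)" using real_sqrt_le_mono by blast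
    then show ?thesis by (simp add: real_sqrt_mult)
  next
    case False
    then have "K = 0 \<or> K = 1" by auto
    moreover have "K = 1 \<Longrightarrow> 1 \<le> sqrt (real C)" using assms by simp
    ultimately show ?thesis
    proof (elim disjE)
      assume K1: "K = 1"
      with \<open>K = 1 \<Longrightarrow> 1 \<le> sqrt (real C)\<close> have "1 \<le> sqrt (real C)" by blast
      moreover have "real K = 1" using K1 by simp
      ultimately show ?thesis by linarith
    qed simp
  qed
  then show ?thesis by (metis ceiling_mono ceiling_of_nat nat_int nat_mono)
qed

theorem lemma5:
  fixes n :: nat and c w :: "nat \<Rightarrow> real" and b \<epsilon> :: real and xh :: "nat \<Rightarrow> real"
  assumes "n \<ge> 1"
    and "\<forall>i\<in>{1..n}. c i \<ge> 0" and "\<forall>i\<in>{1..n}. w i \<ge> 0"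
    and "c 1 = 1"
    and "\<forall>i j. 1 \<le> i \<and> i \<le> j \<and> j \<le> n \<longrightarrow> c j \<le> c i"
    and "0 < \<epsilon>" and "\<epsilon> \<le> 1 / 256"
    and "xh \<in> Q1 n w b"
  shows "\<exists>\<tau>\<in>Gamma \<epsilon>. \<exists>\<rho>. length \<rho> = length \<tau> \<and> (\<forall>r\<in>set \<rho>. 1 \<le> r \<and> r \<le> R_eps \<epsilon>)
           \<and> xh \<in> Ppoly \<epsilon> n c w b \<tau> \<rho>"
proof -
  define a where "a = 1 + \<epsilon>"
  define C where "C = C_eps \<epsilon>"
  define R where "R = R_eps \<epsilon>"
  have a1: "a > 1" using assms(6) a_def by simp
  have pmono: "\<And>t u. t \<le> u \<Longrightarrow> a powr (- real u) \<le> a powr (- real t)"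
    using a1 by (intro powr_mono) auto
  have R1: "R \<ge> 1"
  proof -
    have "\<epsilon> \<le> 1" using assms(7) by linarith
    then have "1 \<le> 1 / \<epsilon>" using le_divide_eq_1_pos[OF assms(6)] by blast
    then have "1 \<le> \<lceil>1 / \<epsilon>\<rceil>" using assms(6) by (simp add: one_le_ceiling)
    from nat_mono[OF this] show ?thesis unfolding R_def R_eps_def by simp
  qed
  have bin: "\<forall>i\<in>{1..n}. xh i \<in> {0,1}" and x1: "xh 1 = 1" and xb: "(\<Sum>i=1..n. w i * xh i) \<ge> b"
    using assms(8) unfolding Q1_def by auto
  have cle1: "\<And>i. i \<in> {2..n} \<Longrightarrow> c i \<le> 1"
  proof -
    fix i assume "i \<in> {2..n}"
    then have "(1::nat) \<le> 1 \<and> 1 \<le> i \<and> i \<le> n" by simp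
    then show "c i \<le> 1" using assms(5) assms(4) by metis
  qed
  define L where "L = {t. t < C \<and> (\<exists>i\<in>{2..n}. xh i = 1 \<and> a powr (- real t) \<ge> c i \<and> c i > a powr (- real (t+1)))}"
  have "L \<subseteq> {..<C}" unfolding L_def by auto
  from greedy[OF this, of 1 0] obtain \<tau> where
    g1: "\<forall>j<length \<tau>. \<tau>!j \<in> L"
    and g2: "\<forall>j. Suc j < length \<tau> \<longrightarrow> \<tau>!j + (1+j) \<le> \<tau>!(Suc j)"
    and g3: "\<forall>t\<in>L. (\<exists>j<length \<tau>. \<tau>!j \<le> t \<and> t < \<tau>!j + (1+j))"
    by auto
  define K where "K = length \<tau>"
  have tC: "\<And>j. j < K \<Longrightarrow> \<tau>!j < C" using g1 unfolding L_def K_def by auto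
  have Gam: "\<tau> \<in> Gamma \<epsilon>"
  proof -
    have "K*(K-1) \<le> 2*C"
    proof (cases K)
      case 0 then show ?thesis by simp
    next
      case (Suc m)
      then have "m*(m+1) \<le> 2 * \<tau>!m" using tri[OF g2, of m] K_def by simp
      moreover have "\<tau>!m < C" using tC Suc by simp
      ultimately show ?thesis using Suc by (simp add: mult.commute)
    qed
    moreover have "K \<ge> 1 \<Longrightarrow> C \<ge> 1" using tC[of 0] by fastforce
    ultimately have "K \<le> nat \<lceil>2 * sqrt (real C)\<rceil>" by (rule lenb)
    moreover have "\<forall>k. 1 \<le> k \<and> k < K \<longrightarrow> \<tau> ! (k - 1) + k \<le> \<tau> ! k"
    proof (intro allI impI)
      fix k assume "1 \<le> k \<and> k < K"
      then obtain j where "k = Suc j" "Suc j < K" by (cases k) auto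
      then show "\<tau> ! (k - 1) + k \<le> \<tau> ! k" using g2 K_def by auto
    qed
    moreover have "K > 0 \<longrightarrow> \<tau> ! (K - 1) + 1 \<le> C"
    proof
      assume "K > 0" then have "K - 1 < K" by simp
      from tC[OF this] show "\<tau> ! (K - 1) + 1 \<le> C" by simp
    qed
    ultimately show ?thesis unfolding Gamma_def K_def C_def by (simp only: mem_Collect_eq)
  qed
  define cnt where "cnt = (\<lambda>k. card {i \<in> S_k \<epsilon> n c \<tau> k. xh i = 1})"
  define \<rho> where "\<rho> = map (\<lambda>j. min (cnt (Suc j)) R) [0..<K]"
  have Sk_sub: "\<And>k. S_k \<epsilon> n c \<tau> k \<subseteq> {2..n}" unfolding S_k_def by auto
  have sumeq: "\<And>k. (\<Sum>i\<in>S_k \<epsilon> n c \<tau> k. xh i) = real (cnt k)"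
  proof -
    fix k
    have "(\<Sum>i\<in>S_k \<epsilon> n c \<tau> k. xh i) = (\<Sum>i\<in>S_k \<epsilon> n c \<tau> k. if xh i = 1 then 1 else 0)"
    proof (rule sum.cong)
      fix i assume "i \<in> S_k \<epsilon> n c \<tau> k"
      then have "i \<in> {1..n}" using Sk_sub[of k] by auto
      then show "xh i = (if xh i = 1 then 1 else 0)" using bin by auto
    qed simp
    also have "\<dots> = real (cnt k)"
    proof -
      have fS: "finite (S_k \<epsilon> n c \<tau> k)" by (rule finite_subset[OF Sk_sub]) simp
      have "real (card {i \<in> S_k \<epsilon> n c \<tau> k. xh i = 1}) = (\<Sum>i\<in>{i \<in> S_k \<epsilon> n c \<tau> k. xh i = 1}. 1)" by simp
      also have "\<dots> = (\<Sum>i\<in>S_k \<epsilon> n c \<tau> k. if xh i = 1 then 1 else 0)"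
        by (rule sum.inter_filter[OF fS])
      finally show ?thesis unfolding cnt_def by simp
    qed
    finally show "(\<Sum>i\<in>S_k \<epsilon> n c \<tau> k. xh i) = real (cnt k)" .
  qed
  have cnt1: "\<And>j. j < K \<Longrightarrow> cnt (Suc j) \<ge> 1"
  proof -
    fix j assume jK: "j < K"
    then have "\<tau>!j \<in> L" using g1 K_def by auto
    then obtain i where i: "i\<in>{2..n}" "xh i = 1" "a powr (- real (\<tau>!j)) \<ge> c i" "c i > a powr (- real (\<tau>!j+1))"
      unfolding L_def by auto
    have "min (\<tau>!j + Suc j) C \<ge> \<tau>!j+1" using tC[OF jK] by simp
    then have "c i > a powr (- real (min (\<tau>!j + Suc j) C))" using pmono[OF \<open>min (\<tau>!j + Suc j) C \<ge> \<tau>!j+1\<close>] i(4) by linarith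
    then have "i \<in> {i \<in> S_k \<epsilon> n c \<tau> (Suc j). xh i = 1}" using i by (simp add: S_k_def a_def[symmetric] C_def[symmetric])
    have "finite (S_k \<epsilon> n c \<tau> (Suc j))" by (rule finite_subset[OF Sk_sub]) simp
    then have "finite {i \<in> S_k \<epsilon> n c \<tau> (Suc j). xh i = 1}" by simp
    moreover note \<open>i \<in> {i \<in> S_k \<epsilon> n c \<tau> (Suc j). xh i = 1}\<close>
    ultimately show "cnt (Suc j) \<ge> 1" unfolding cnt_def
      by (metis One_nat_def Suc_leI card_gt_0_iff empty_iff)
  qed
  have rho_ok: "\<forall>r\<in>set \<rho>. 1 \<le> r \<and> r \<le> R" unfolding \<rho>_def using cnt1 R1 by auto
  have cover: "\<forall>i\<in>{2..n}. i \<notin> (\<Union>k\<in>{1..K}. S_k \<epsilon> n c \<tau> k) \<union> S_inf \<epsilon> n c \<tau> \<longrightarrow> xh i = 0"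
  proof (intro ballI impI)
    fix i assume i2: "i \<in> {2..n}" and nin: "i \<notin> (\<Union>k\<in>{1..K}. S_k \<epsilon> n c \<tau> k) \<union> S_inf \<epsilon> n c \<tau>"
    show "xh i = 0"
    proof (rule ccontr)
      assume "xh i \<noteq> 0"
      then have xi: "xh i = 1" using bin i2 by auto
      show False
      proof (cases "c i > a powr (- real C)")
        case True
        from level[OF a1 cle1[OF i2] True] obtain t where t: "t < C" "a powr (- real t) \<ge> c i" "c i > a powr (- real (t+1))"
          by auto
        then have "t \<in> L" unfolding L_def using i2 xi by auto
        then obtain j where j: "j < K" "\<tau>!j \<le> t" "t < \<tau>!j + (1+j)" using g3 K_def by auto
        have "min (\<tau>!j + Suc j) C \<ge> t+1" using j t by simp
        then have "c i > a powr (- real (min (\<tau>!j + Suc j) C))" using pmono[OF \<open>min (\<tau>!j + Suc j) C \<ge> t+1\<close>] t(3) by linarith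
        moreover have "a powr (- real (\<tau>!j)) \<ge> c i" using pmono[OF j(2)] t(2) by linarith
        ultimately have "i \<in> S_k \<epsilon> n c \<tau> (Suc j)" using i2 by (simp add: S_k_def a_def[symmetric] C_def[symmetric])
        then show False using nin j(1) by auto
      next
        case False
        have "i \<in> S_inf \<epsilon> n c \<tau>"
          unfolding S_inf_def
        proof (intro CollectI conjI impI ballI)
          show "i \<in> {2..n}" by (rule i2)
          show "c i \<le> (1 + \<epsilon>) powr - real (C_eps \<epsilon>)" using False a_def C_def by simp
        next
          fix l assume "0 < length \<tau>" "l \<in> S_k \<epsilon> n c \<tau> (length \<tau>)"
          then have "c l > a powr (- real (min (\<tau> ! (length \<tau> - 1) + length \<tau>) C))"
            by (simp add: S_k_def a_def[symmetric] C_def[symmetric])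
          moreover have "a powr (- real (min (\<tau> ! (length \<tau> - 1) + length \<tau>) C)) \<ge> a powr (- real C)"
            by (rule pmono) simp
          ultimately show "c i < c l" using False by linarith
        qed
        then show False using nin by auto
      qed
    qed
  qed
  have "xh \<in> Ppoly \<epsilon> n c w b \<tau> \<rho>"
    unfolding Ppoly_def
  proof (intro CollectI conjI ballI impI)
    show "xh 1 = 1" by (rule x1)
    show "(\<Sum>i=1..n. w i * xh i) \<ge> b" by (rule xb)
  next
    fix k assume k: "k \<in> {1..length \<tau>}" "\<rho> ! (k - 1) < R_eps \<epsilon>"
    then have "\<rho> ! (k-1) = cnt k" using k unfolding \<rho>_def R_def K_def by auto
    then show "(\<Sum>i\<in>S_k \<epsilon> n c \<tau> k. xh i) = real (\<rho> ! (k - 1))" using sumeq by simp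
  next
    fix k assume k: "k \<in> {1..length \<tau>}" "\<rho> ! (k - 1) = R_eps \<epsilon>"
    then have "\<rho> ! (k-1) \<le> cnt k" unfolding \<rho>_def R_def K_def by auto
    then show "(\<Sum>i\<in>S_k \<epsilon> n c \<tau> k. xh i) \<ge> real (\<rho> ! (k - 1))" using sumeq by simp
  next
    fix i assume "i \<in> {2..n}" "i \<notin> (\<Union>k\<in>{1..length \<tau>}. S_k \<epsilon> n c \<tau> k) \<union> S_inf \<epsilon> n c \<tau>"
    then show "xh i = 0" using cover K_def by auto
  next
    fix i assume "i \<in> (\<Union>k\<in>{1..length \<tau>}. S_k \<epsilon> n c \<tau> k) \<union> S_inf \<epsilon> n c \<tau>"
    then have "i \<in> {2..n}" unfolding S_inf_def using Sk_sub by blast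
    then have "xh i \<in> {0,1}" using bin by auto
    then show "0 \<le> xh i" "xh i \<le> 1" by auto
  qed
  moreover have "length \<rho> = length \<tau>" unfolding \<rho>_def K_def by simp
  ultimately show ?thesis using Gam rho_ok R_def by blast
qed

end
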